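(* Let $K$ be a field of characteristic $0$, $S=K[x_1,\dots,x_n]$, and let $I,J\subset S$ be Borel-fixed ideals, where $I$ has minimal monomial generators $f_1,\dots,f_m$ all of the same degree. Let $\varphi\in\mathrm{GL}_n(K)$ be upper triangular. Then $\widetilde\varphi(Z_t(I,S/J))\subset Z_t(I,S/J)$ for every $t$.
   Context: A matrix $\varphi=(a_{ij})\in\mathrm{GL}_n(K)$ acts on $S$ by $\varphi(f)(x_1,\dots,x_n)=f(\sum_k a_{k1}x_k,\dots,\sum_k a_{kn}x_k)$. A monomial ideal is Borel-fixed if $\varphi(I)=I$ for all invertible upper triangular $\varphi$ (equivalently in characteristic $0$: $fx_j\in I$, $i<j$ imply $fx_i\in I$ for monomials $f$). Let $F=\bigoplus_{i=1}^m S(-\deg f_i)$ with basis $e_1,\dots,e_m$, $\phi(e_i)=f_i$, and $K(I,S/J)=\bigwedge^\bullet F\otimes_S S/J$ the Koszul complex with differential induced by $\phi$; $Z_t(I,S/J)$ are its cycles in position $t$. For upper triangular $\varphi$: since $\varphi(J)=J$, $\varphi$ induces an automorphism $\varphi(h+J)=\varphi(h)+J$ of $S/J$; since $\varphi(I)=I$ and the $f_i$ have the same degree, one writes uniquely $\varphi(f_i)=\sum_j c_{ij}f_j$ with $c_{ij}\in K$, and sets $\varphi(e_i)=\sum_j c_{ij}e_j$. Then $\widetilde\varphi:K_t(I,S/J)\to K_t(I,S/J)$ is the $K$-linear map with $\widetilde\varphi(e_{u_1}\wedge\cdots\wedge e_{u_t}\otimes h)=\varphi(e_{u_1})\wedge\cdots\wedge\varphi(e_{u_t})\otimes\varphi(h)$.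 *)

theory Defs
  imports Main "HOL-Library.Poly_Mapping"
begin

text \<open>Monomials are exponent vectors nat \<Rightarrow>0 nat (variable x_(i+1) has index i);
  polynomials are finitely supported coefficient functions on monomials.\<close>

type_synonym 'a mpoly = "(nat \<Rightarrow>\<^sub>0 nat) \<Rightarrow>\<^sub>0 'a"

definition in_S :: "nat \<Rightarrow> ('a::zero) mpoly \<Rightarrow> bool" where
  "in_S n p \<longleftrightarrow> (\<forall>\<alpha>\<in>Poly_Mapping.keys p. Poly_Mapping.keys \<alpha> \<subseteq> {..<n})"

definition const :: "'a::zero \<Rightarrow> 'a mpoly" where
  "const c = Poly_Mapping.single 0 c"

definition monom :: "(nat \<Rightarrow>\<^sub>0 nat) \<Rightarrow> ('a::{zero,one}) mpoly" where
  "monom \<alpha> = Poly_Mapping.single \<alpha> 1"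

definition var :: "nat \<Rightarrow> ('a::{zero,one}) mpoly" where
  "var i = monom (Poly_Mapping.single i 1)"

definition mdeg :: "(nat \<Rightarrow>\<^sub>0 nat) \<Rightarrow> nat" where
  "mdeg \<alpha> = (\<Sum>i\<in>Poly_Mapping.keys \<alpha>. Poly_Mapping.lookup \<alpha> i)"

definition is_ideal :: "nat \<Rightarrow> ('a::comm_ring_1) mpoly set \<Rightarrow> bool" where
  "is_ideal n I \<longleftrightarrow> I \<subseteq> {p. in_S n p} \<and> 0 \<in> I \<and>
     (\<forall>p\<in>I. \<forall>q\<in>I. p + q \<in> I) \<and> (\<forall>p\<in>I. \<forall>h. in_S n h \<longrightarrow> h * p \<in> I)"

definition ideal_gen :: "nat \<Rightarrow> ('a::comm_ring_1) mpoly set \<Rightarrow> 'a mpoly set" where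
  "ideal_gen n G = {(\<Sum>g\<in>F. h g * g) | F h. finite F \<and> F \<subseteq> G \<and> (\<forall>g\<in>F. in_S n (h g))}"

definition monomial_ideal :: "nat \<Rightarrow> ('a::comm_ring_1) mpoly set \<Rightarrow> bool" where
  "monomial_ideal n I \<longleftrightarrow> is_ideal n I \<and>
     (\<exists>M. M \<subseteq> {\<alpha>. Poly_Mapping.keys \<alpha> \<subseteq> {..<n}} \<and> I = ideal_gen n (monom ` M))"

text \<open>A matrix is a function A :: nat \<Rightarrow> nat \<Rightarrow> 'a, entry (i,j) for i,j < n
  (0-based indices). phi(f)(x_1..x_n) = f(sum_k a_k1 x_k, ..., sum_k a_kn x_k).\<close>

definition lin_form :: "nat \<Rightarrow> (nat \<Rightarrow> nat \<Rightarrow> 'a::comm_ring_1) \<Rightarrow> nat \<Rightarrow> 'a mpoly" where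
  "lin_form n A j = (\<Sum>k<n. const (A k j) * var k)"

definition act :: "nat \<Rightarrow> (nat \<Rightarrow> nat \<Rightarrow> 'a::comm_ring_1) \<Rightarrow> 'a mpoly \<Rightarrow> 'a mpoly" where
  "act n A f = (\<Sum>\<alpha>\<in>Poly_Mapping.keys f. const (Poly_Mapping.lookup f \<alpha>) *
                   (\<Prod>j\<in>Poly_Mapping.keys \<alpha>. lin_form n A j ^ Poly_Mapping.lookup \<alpha> j))"

definition invertible_mat :: "nat \<Rightarrow> (nat \<Rightarrow> nat \<Rightarrow> 'a::comm_ring_1) \<Rightarrow> bool" where
  "invertible_mat n A \<longleftrightarrow> (\<exists>B. \<forall>i<n. \<forall>j<n.
      (\<Sum>k<n. A i k * B k j) = (if i = j then 1 else 0) \<and>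
      (\<Sum>k<n. B i k * A k j) = (if i = j then 1 else 0))"

definition upper_triangular :: "nat \<Rightarrow> (nat \<Rightarrow> nat \<Rightarrow> 'a::zero) \<Rightarrow> bool" where
  "upper_triangular n A \<longleftrightarrow> (\<forall>i<n. \<forall>j<n. j < i \<longrightarrow> A i j = 0)"

definition borel_fixed :: "nat \<Rightarrow> ('a::comm_ring_1) mpoly set \<Rightarrow> bool" where
  "borel_fixed n I \<longleftrightarrow> monomial_ideal n I \<and>
     (\<forall>A. invertible_mat n A \<and> upper_triangular n A \<longrightarrow> act n A ` I = I)"

text \<open>f_1..f_m (here f 0 .. f (m-1)) are the minimal monomial generators of I,
  all of degree d.\<close>
definition min_mon_gens_same_deg ::
  "nat \<Rightarrow> ('a::comm_ring_1) mpoly set \<Rightarrow> nat \<Rightarrow> (nat \<Rightarrow> 'a mpoly) \<Rightarrow> bool" where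
  "min_mon_gens_same_deg n I m f \<longleftrightarrow>
     inj_on f {..<m} \<and>
     (\<exists>d. \<forall>i<m. \<exists>\<alpha>. f i = monom \<alpha> \<and> Poly_Mapping.keys \<alpha> \<subseteq> {..<n} \<and> mdeg \<alpha> = d) \<and>
     I = ideal_gen n (f ` {..<m}) \<and>
     (\<forall>i<m. \<forall>j<m. i \<noteq> j \<longrightarrow> f j \<notin> ideal_gen n {f i})"

text \<open>An element of K_t(I,S/J) = /^t F \<otimes> S/J is represented by a function
  z :: nat set \<Rightarrow> 'a mpoly giving the coefficient (a representative in S of a class
  of S/J) of e_U = e_u1 \<and> ... \<and> e_ut for U = {u1 < ... < ut} \<subseteq> {..<m}.\<close>

definition koszul_elem :: "nat \<Rightarrow> nat \<Rightarrow> nat \<Rightarrow> (nat set \<Rightarrow> ('a::comm_ring_1) mpoly) \<Rightarrow> bool" where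
  "koszul_elem n m t z \<longleftrightarrow> (\<forall>U. in_S n (z U)) \<and>
     (\<forall>U. \<not> (U \<subseteq> {..<m} \<and> card U = t) \<longrightarrow> z U = 0)"

text \<open>Koszul differential: d(e_u1\<and>..\<and>e_ut \<otimes> h) = sum_k (-1)^(k-1) f_uk e_(U-{uk}) \<otimes> h.
  The coefficient of e_V in d z.\<close>
definition koszul_d :: "nat \<Rightarrow> (nat \<Rightarrow> ('a::comm_ring_1) mpoly) \<Rightarrow> (nat set \<Rightarrow> 'a mpoly) \<Rightarrow> nat set \<Rightarrow> 'a mpoly" where
  "koszul_d m f z V = (\<Sum>u\<in>{..<m} - V. (-1) ^ card {v\<in>V. v < u} * f u * z (insert u V))"

text \<open>Cycles of K_t(I,S/J): d z = 0 in K_(t-1)(I,S/J), i.e. every coefficient lies in J.\<close>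
definition koszul_cycle ::
  "nat \<Rightarrow> nat \<Rightarrow> (nat \<Rightarrow> ('a::comm_ring_1) mpoly) \<Rightarrow> 'a mpoly set \<Rightarrow> nat \<Rightarrow> (nat set \<Rightarrow> 'a mpoly) \<Rightarrow> bool" where
  "koszul_cycle n m f J t z \<longleftrightarrow> koszul_elem n m t z \<and> (\<forall>V. koszul_d m f z V \<in> J)"

definition act_coeff :: "nat \<Rightarrow> (nat \<Rightarrow> nat \<Rightarrow> 'a::comm_ring_1) \<Rightarrow> nat \<Rightarrow> (nat \<Rightarrow> 'a mpoly) \<Rightarrow> nat \<Rightarrow> nat \<Rightarrow> 'a" where
  "act_coeff n A m f i = (THE c. (\<forall>j\<ge>m. c j = 0) \<and> act n A (f i) = (\<Sum>j<m. const (c j) * f j))"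

text \<open>Exterior algebra /^\<bullet> K^m over K: elements are coefficient functions on
  subsets of {..<m} (basis e_W).\<close>
definition ext_mult :: "nat \<Rightarrow> (nat set \<Rightarrow> 'a::comm_ring_1) \<Rightarrow> (nat set \<Rightarrow> 'a) \<Rightarrow> nat set \<Rightarrow> 'a" where
  "ext_mult m x y W = (\<Sum>U\<in>Pow {..<m}. \<Sum>V\<in>Pow {..<m}.
      if U \<inter> V = {} \<and> U \<union> V = W
      then (-1) ^ card {(u, v). u \<in> U \<and> v \<in> V \<and> v < u} * x U * y V else 0)"

definition ext_one :: "nat set \<Rightarrow> 'a::comm_ring_1" where
  "ext_one W = (if W = {} then 1 else 0)"

definition act_e :: "nat \<Rightarrow> (nat \<Rightarrow> nat \<Rightarrow> 'a::comm_ring_1) \<Rightarrow> nat \<Rightarrow> (nat \<Rightarrow> 'a mpoly) \<Rightarrow> nat \<Rightarrow> nat set \<Rightarrow> 'a" where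
  "act_e n A m f i W = (if \<exists>j<m. W = {j} then act_coeff n A m f i (THE j. W = {j}) else 0)"

definition act_wedge :: "nat \<Rightarrow> (nat \<Rightarrow> nat \<Rightarrow> 'a::comm_ring_1) \<Rightarrow> nat \<Rightarrow> (nat \<Rightarrow> 'a mpoly) \<Rightarrow> nat set \<Rightarrow> nat set \<Rightarrow> 'a" where
  "act_wedge n A m f U = foldr (ext_mult m) (map (act_e n A m f) (sorted_list_of_set U)) ext_one"

text \<open>phi-tilde, extended K-linearly:
  phi~(e_U \<otimes> h) = phi(e_u1) \<and> ... \<and> phi(e_ut) \<otimes> phi(h).\<close>
definition koszul_act :: "nat \<Rightarrow> (nat \<Rightarrow> nat \<Rightarrow> 'a::comm_ring_1) \<Rightarrow> nat \<Rightarrow> (nat \<Rightarrow> 'a mpoly) \<Rightarrow> (nat set \<Rightarrow> 'a mpoly) \<Rightarrow> nat set \<Rightarrow> 'a mpoly" where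
  "koszul_act n A m f z W = (\<Sum>U\<in>Pow {..<m}. const (act_wedge n A m f U W) * act n A (z U))"

end

theory Submission
  imports Defs
begin


lemma pm_repr: "(p::('b \<Rightarrow>\<^sub>0 'c::comm_monoid_add)) = (\<Sum>\<alpha>\<in>Poly_Mapping.keys p. Poly_Mapping.single \<alpha> (Poly_Mapping.lookup p \<alpha>))"
proof (rule poly_mapping_eqI)
  fix k
  show "Poly_Mapping.lookup p k = Poly_Mapping.lookup (\<Sum>\<alpha>\<in>Poly_Mapping.keys p. Poly_Mapping.single \<alpha> (Poly_Mapping.lookup p \<alpha>)) k"
    by (simp add: lookup_sum lookup_single when_def in_keys_iff)
qed

lemma pm_repr_super:
  assumes "finite S" "Poly_Mapping.keys p \<subseteq> S"
  shows "(p::('b \<Rightarrow>\<^sub>0 'c::comm_monoid_add)) = (\<Sum>\<alpha>\<in>S. Poly_Mapping.single \<alpha> (Poly_Mapping.lookup p \<alpha>))"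
proof -
  have "(\<Sum>\<alpha>\<in>S. Poly_Mapping.single \<alpha> (Poly_Mapping.lookup p \<alpha>)) = (\<Sum>\<alpha>\<in>Poly_Mapping.keys p. Poly_Mapping.single \<alpha> (Poly_Mapping.lookup p \<alpha>))"
    using assms by (intro sum.mono_neutral_right) (auto simp: in_keys_iff)
  then show ?thesis using pm_repr[of p] by simp
qed

lemma keys_add_nat: "Poly_Mapping.keys ((\<alpha>::nat \<Rightarrow>\<^sub>0 nat) + \<beta>) = Poly_Mapping.keys \<alpha> \<union> Poly_Mapping.keys \<beta>"
  by (auto simp: in_keys_iff lookup_add)

definition M :: "nat \<Rightarrow> (nat \<Rightarrow> nat \<Rightarrow> 'a::comm_ring_1) \<Rightarrow> (nat \<Rightarrow>\<^sub>0 nat) \<Rightarrow> 'a mpoly" where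
  "M n A \<alpha> = (\<Prod>j\<in>Poly_Mapping.keys \<alpha>. lin_form n A j ^ Poly_Mapping.lookup \<alpha> j)"

lemma M_super: "finite S \<Longrightarrow> Poly_Mapping.keys \<alpha> \<subseteq> S \<Longrightarrow> M n A \<alpha> = (\<Prod>j\<in>S. lin_form n A j ^ Poly_Mapping.lookup \<alpha> j)"
  unfolding M_def by (intro prod.mono_neutral_left) (auto simp: in_keys_iff)

lemma M_add: "M n A (\<alpha> + \<beta>) = M n A \<alpha> * M n A \<beta>"
proof -
  let ?S = "Poly_Mapping.keys \<alpha> \<union> Poly_Mapping.keys \<beta>"
  have "M n A (\<alpha> + \<beta>) = (\<Prod>j\<in>?S. lin_form n A j ^ Poly_Mapping.lookup (\<alpha>+\<beta>) j)"
    by (rule M_super) (auto simp: keys_add_nat)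
  also have "\<dots> = (\<Prod>j\<in>?S. lin_form n A j ^ Poly_Mapping.lookup \<alpha> j * lin_form n A j ^ Poly_Mapping.lookup \<beta> j)"
    by (simp add: lookup_add power_add)
  also have "\<dots> = M n A \<alpha> * M n A \<beta>"
    using M_super[of ?S \<alpha> n A] M_super[of ?S \<beta> n A] by (simp add: prod.distrib)
  finally show ?thesis .
qed

lemma M_zero: "M n A 0 = 1" by (simp add: M_def)

lemma const_zero[simp]: "const 0 = 0" by (simp add: const_def)
lemma const_one[simp]: "const 1 = 1" by (simp add: const_def)
lemma const_mult: "const (a * b) = const a * const b" by (simp add: const_def mult_single)
lemma const_add: "const (a + b) = const a + const b" by (simp add: const_def single_add)
lemma const_uminus: "const (- a) = - const a" by (simp add: const_def single_uminus)
lemma const_power: "const (a ^ k) = const a ^ k" by (induct k) (simp_all add: const_mult)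
lemma const_sum: "const (sum g S) = (\<Sum>x\<in>S. const (g x))"
  by (induct S rule: infinite_finite_induct) (simp_all add: const_add)
lemma const_neg1_pow: "const ((-1) ^ k) = (-1) ^ k" by (simp add: const_power const_uminus)

lemma act_super:
  assumes "finite S" "Poly_Mapping.keys p \<subseteq> S"
  shows "act n A p = (\<Sum>\<alpha>\<in>S. const (Poly_Mapping.lookup p \<alpha>) * M n A \<alpha>)"
  unfolding act_def M_def[symmetric] using assms
  by (intro sum.mono_neutral_left) (auto simp: in_keys_iff)

lemma act_add: "act n A (p + q) = act n A p + act n A q"
proof -
  let ?S = "Poly_Mapping.keys p \<union> Poly_Mapping.keys q"
  have "act n A (p+q) = (\<Sum>\<alpha>\<in>?S. const (Poly_Mapping.lookup (p+q) \<alpha>) * M n A \<alpha>)"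
    by (rule act_super) (use keys_add[of p q] in auto)
  also have "\<dots> = (\<Sum>\<alpha>\<in>?S. const (Poly_Mapping.lookup p \<alpha>) * M n A \<alpha>) + (\<Sum>\<alpha>\<in>?S. const (Poly_Mapping.lookup q \<alpha>) * M n A \<alpha>)"
    by (simp add: lookup_add const_add distrib_right sum.distrib)
  also have "\<dots> = act n A p + act n A q"
    using act_super[of ?S p n A] act_super[of ?S q n A] by simp
  finally show ?thesis .
qed

lemma act_zero[simp]: "act n A 0 = 0" by (simp add: act_def)

lemma act_sum: "act n A (sum g S) = (\<Sum>x\<in>S. act n A (g x))"
  by (induct S rule: infinite_finite_induct) (simp_all add: act_add)

lemma act_single: "act n A (Poly_Mapping.single \<alpha> c) = const c * M n A \<alpha>"
  by (subst act_super[of "{\<alpha>}"]) (auto simp: lookup_single)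

lemma act_mult: "act n A (p * q) = act n A p * act n A q"
proof -
  let ?P = "Poly_Mapping.keys p" and ?Q = "Poly_Mapping.keys q"
  have "p * q = (\<Sum>\<alpha>\<in>?P. Poly_Mapping.single \<alpha> (Poly_Mapping.lookup p \<alpha>)) * (\<Sum>\<beta>\<in>?Q. Poly_Mapping.single \<beta> (Poly_Mapping.lookup q \<beta>))"
    using pm_repr[of p] pm_repr[of q] by simp
  also have "\<dots> = (\<Sum>\<alpha>\<in>?P. \<Sum>\<beta>\<in>?Q. Poly_Mapping.single (\<alpha>+\<beta>) (Poly_Mapping.lookup p \<alpha> * Poly_Mapping.lookup q \<beta>))"
    by (simp only: sum_product mult_single)
  finally have "act n A (p*q) = (\<Sum>\<alpha>\<in>?P. \<Sum>\<beta>\<in>?Q. const (Poly_Mapping.lookup p \<alpha>) * M n A \<alpha> * (const (Poly_Mapping.lookup q \<beta>) * M n A \<beta>))"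
    by (simp add: act_sum act_single const_mult M_add mult_ac)
  also have "\<dots> = act n A p * act n A q"
    by (simp only: act_def M_def[symmetric] sum_product)
  finally show ?thesis .
qed

lemma act_const: "act n A (const c) = const c"
  by (simp add: const_def act_single M_zero)

lemma act_neg1_pow: "act n A ((-1)^k) = (-1)^k"
  using act_const[of n A "(-1)^k"] by (simp add: const_neg1_pow)

lemma act_monom: "act n A (monom \<alpha>) = M n A \<alpha>"
  by (simp add: monom_def act_single)

lemma in_S_add: "in_S n p \<Longrightarrow> in_S n q \<Longrightarrow> in_S n (p + q)"
  unfolding in_S_def using keys_add[of p q] by (meson UnE subsetD)


lemma in_S_mult: "in_S n p \<Longrightarrow> in_S n q \<Longrightarrow> in_S n (p * q)"
  unfolding in_S_def
proof (intro ballI)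
  fix \<gamma> assume a: "\<forall>\<alpha>\<in>Poly_Mapping.keys p. Poly_Mapping.keys \<alpha> \<subseteq> {..<n}"
    "\<forall>\<alpha>\<in>Poly_Mapping.keys q. Poly_Mapping.keys \<alpha> \<subseteq> {..<n}" and "\<gamma> \<in> Poly_Mapping.keys (p * q)"
  then obtain x y where "\<gamma> = x + y" "x \<in> Poly_Mapping.keys p" "y \<in> Poly_Mapping.keys q"
    using keys_mult[of p q] by blast
  then show "Poly_Mapping.keys \<gamma> \<subseteq> {..<n}" using a by (simp add: keys_add_nat)
qed

lemma in_S_zero[simp]: "in_S n 0" by (simp add: in_S_def)
lemma in_S_one[simp]: "in_S n 1" by (simp add: in_S_def)
lemma in_S_const[simp]: "in_S n (const c)" by (simp add: in_S_def const_def)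
lemma in_S_sum: "(\<And>x. x \<in> S \<Longrightarrow> in_S n (g x)) \<Longrightarrow> in_S n (sum g S)"
  by (induct S rule: infinite_finite_induct) (auto intro: in_S_add)
lemma in_S_prod: "(\<And>x. x \<in> S \<Longrightarrow> in_S n (g x)) \<Longrightarrow> in_S n (prod g S)"
  by (induct S rule: infinite_finite_induct) (auto intro: in_S_mult)
lemma in_S_power: "in_S n p \<Longrightarrow> in_S n (p ^ k)"
  by (induct k) (auto intro: in_S_mult)
lemma in_S_var: "k < n \<Longrightarrow> in_S n (var k)"
  by (simp add: in_S_def var_def monom_def)
lemma in_S_lin_form: "in_S n (lin_form n A j)"
  unfolding lin_form_def by (auto intro!: in_S_sum in_S_mult in_S_var)
lemma in_S_M: "in_S n (M n A \<alpha>)"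
  unfolding M_def by (auto intro!: in_S_prod in_S_power in_S_lin_form)
lemma in_S_act: "in_S n (act n A p)"
  unfolding act_def M_def[symmetric] by (auto intro!: in_S_sum in_S_mult in_S_M)
lemma in_S_neg1_pow: "in_S n ((-1)^k)"
  by (metis const_neg1_pow in_S_const)



definition vec :: "nat \<Rightarrow> (nat \<Rightarrow> 'a::comm_ring_1) \<Rightarrow> nat set \<Rightarrow> 'a" where
  "vec m c W = (if \<exists>j<m. W = {j} then c (THE j. W = {j}) else 0)"

definition Nc :: "nat \<Rightarrow> nat set \<Rightarrow> nat" where
  "Nc x V = card {v\<in>V. v < x}"

definition Lw :: "nat \<Rightarrow> (nat \<Rightarrow> 'a::comm_ring_1) \<Rightarrow> (nat set \<Rightarrow> 'a) \<Rightarrow> nat set \<Rightarrow> 'a" where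
  "Lw m a Q W = (if W \<subseteq> {..<m} then (\<Sum>w\<in>W. (-1) ^ Nc w W * a w * Q (W - {w})) else 0)"

definition iota :: "nat \<Rightarrow> (nat set \<Rightarrow> 'a::comm_ring_1) \<Rightarrow> nat set \<Rightarrow> 'a" where
  "iota j x V = (if j \<notin> V then (-1) ^ Nc j V * x (insert j V) else 0)"

definition PW :: "nat \<Rightarrow> (nat \<Rightarrow> nat \<Rightarrow> 'a::comm_ring_1) \<Rightarrow> nat set \<Rightarrow> nat set \<Rightarrow> 'a" where
  "PW m c U = foldr (ext_mult m) (map (\<lambda>i. vec m (c i)) (sorted_list_of_set U)) ext_one"

lemma vec_single: "j < m \<Longrightarrow> vec m c {j} = c j"
  by (auto simp: vec_def)

lemma G_single:
  assumes j: "j < m"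
  shows "(\<Sum>V\<in>Pow {..<m}. if {j} \<inter> V = {} \<and> {j} \<union> V = W
      then (-1) ^ card {(u, v). u \<in> {j} \<and> v \<in> V \<and> v < u} * vec m c {j} * Q V else 0)
    = (if j \<in> W \<and> W \<subseteq> {..<m} then (-1) ^ Nc j W * c j * Q (W - {j}) else (0::'a::comm_ring_1))"
proof (cases "j \<in> W \<and> W \<subseteq> {..<m}")
  case True
  have cond: "V \<in> Pow {..<m} \<Longrightarrow> ({j} \<inter> V = {} \<and> {j} \<union> V = W) \<longleftrightarrow> V = W - {j}" for V
    using True by auto
  have "(\<Sum>V\<in>Pow {..<m}. if {j} \<inter> V = {} \<and> {j} \<union> V = W
      then (-1) ^ card {(u, v). u \<in> {j} \<and> v \<in> V \<and> v < u} * vec m c {j} * Q V else 0)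
    = (\<Sum>V\<in>Pow {..<m}. if V = W - {j}
      then (-1) ^ card {(u, v). u \<in> {j} \<and> v \<in> V \<and> v < u} * vec m c {j} * Q V else 0)"
    by (rule sum.cong) (simp_all only: cond)
  also have "\<dots> = (-1) ^ card {(u, v). u \<in> {j} \<and> v \<in> W - {j} \<and> v < u} * vec m c {j} * Q (W - {j})"
    using True by (subst sum.delta) auto
  also have "{(u, v). u \<in> {j} \<and> v \<in> W - {j} \<and> v < u} = (\<lambda>v. (j, v)) ` {v\<in>W. v < j}"
    by auto
  also have "card \<dots> = Nc j W"
    unfolding Nc_def by (rule card_image) (auto simp: inj_on_def)
  finally show ?thesis using True j by (simp add: vec_single)
next
  case False
  have "V \<in> Pow {..<m} \<Longrightarrow> \<not> ({j} \<inter> V = {} \<and> {j} \<union> V = W)" for V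
    using False j by auto
  then have "(\<Sum>V\<in>Pow {..<m}. if {j} \<inter> V = {} \<and> {j} \<union> V = W
      then (-1) ^ card {(u, v). u \<in> {j} \<and> v \<in> V \<and> v < u} * vec m c {j} * Q V else 0) = 0"
    by (intro sum.neutral) auto
  then show ?thesis by (simp only: False if_False)
qed

lemma ext_vec: "ext_mult m (vec m c) Q W = Lw m c Q W"
proof -
  let ?G = "\<lambda>U. \<Sum>V\<in>Pow {..<m}. if U \<inter> V = {} \<and> U \<union> V = W
      then (-1) ^ card {(u, v). u \<in> U \<and> v \<in> V \<and> v < u} * vec m c U * Q V else 0"
  have "ext_mult m (vec m c) Q W = (\<Sum>U\<in>Pow {..<m}. ?G U)"
    by (simp add: ext_mult_def)
  also have "\<dots> = (\<Sum>U\<in>(\<lambda>j. {j}) ` {..<m}. ?G U)"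
  proof (rule sum.mono_neutral_right)
    show "\<forall>U\<in>Pow {..<m} - (\<lambda>j. {j}) ` {..<m}. ?G U = 0"
    proof
      fix U assume "U \<in> Pow {..<m} - (\<lambda>j. {j}) ` {..<m}"
      then have v0: "vec m c U = 0" by (auto simp: vec_def)
      show "?G U = 0" by (rule sum.neutral) (simp add: v0)
    qed
  qed auto
  also have "\<dots> = (\<Sum>j<m. ?G {j})"
    by (subst sum.reindex) (auto simp: inj_on_def)
  also have "\<dots> = (\<Sum>j<m. if j \<in> W \<and> W \<subseteq> {..<m} then (-1) ^ Nc j W * c j * Q (W - {j}) else 0)"
    by (rule sum.cong) (simp_all only: G_single lessThan_iff)
  also have "\<dots> = Lw m c Q W"
  proof (cases "W \<subseteq> {..<m}")
    case True
    then have e: "{j. j < m \<and> j \<in> W} = W" by auto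
    then show ?thesis using True by (simp add: Lw_def sum.inter_filter[symmetric] e)
  qed (simp add: Lw_def)
  finally show ?thesis .
qed

lemma PW_empty: "PW m c {} = ext_one"
  by (simp add: PW_def)

lemma PW_insert:
  assumes "finite U" "\<forall>x\<in>U. b < x"
  shows "PW m c (insert b U) = Lw m (c b) (PW m c U)"
proof -
  have ne: "insert b U \<noteq> {}" by simp
  have mn: "Min (insert b U) = b" using assms by (intro Min_eqI) auto
  have rm: "insert b U - {b} = U" using assms by auto
  have "sorted_list_of_set (insert b U) = b # sorted_list_of_set U"
    using sorted_list_of_set_nonempty[OF _ ne] assms mn rm by simp
  then show ?thesis
    by (simp add: PW_def ext_vec fun_eq_iff)
qed

lemma Lw_nz: "Lw m a Q W \<noteq> 0 \<Longrightarrow> W \<subseteq> {..<m} \<and> (\<exists>w\<in>W. Q (W - {w}) \<noteq> 0)"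
proof -
  assume a: "Lw m a Q W \<noteq> 0"
  then have W: "W \<subseteq> {..<m}" by (simp add: Lw_def split: if_splits)
  with a obtain w where "w \<in> W" "(-1) ^ Nc w W * a w * Q (W - {w}) \<noteq> 0"
    by (auto simp: Lw_def elim!: sum.not_neutral_contains_not_neutral)
  then show ?thesis using W by (metis mult_zero_right)
qed

lemma PW_supp:
  assumes "finite U"
  shows "PW m c U W \<noteq> 0 \<Longrightarrow> W \<subseteq> {..<m} \<and> card W = card U"
  using assms
proof (induction U arbitrary: W rule: finite_linorder_min_induct)
  case empty
  then show ?case by (simp add: PW_empty ext_one_def split: if_splits)
next
  case (insert b U)
  from insert.prems[unfolded PW_insert[OF insert.hyps]] obtain w where
    W: "W \<subseteq> {..<m}" "w \<in> W" "PW m c U (W - {w}) \<noteq> 0"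
    using Lw_nz by blast
  with insert.IH have "card (W - {w}) = card U" by blast
  moreover have "finite W" using W(1) finite_subset by blast
  moreover have "b \<notin> U" using insert.hyps by auto
  ultimately have "card W = card (insert b U)"
    using W(2) insert.hyps(1) by (simp add: card_Diff_singleton_if) (metis One_nat_def Suc_pred card_gt_0_iff empty_iff)
  with W show ?case by simp
qed

lemma Nc_insert: "finite V \<Longrightarrow> j \<notin> V \<Longrightarrow> Nc w (insert j V) = Nc w V + (if j < w then 1 else 0)"
proof -
  assume "finite V" "j \<notin> V"
  then show ?thesis
  proof (cases "j < w")
    case True
    then have "{v\<in>insert j V. v < w} = insert j {v\<in>V. v < w}" by auto
    then show ?thesis using True \<open>finite V\<close> \<open>j \<notin> V\<close> by (simp add: Nc_def)
  next
    case False
    then have "{v\<in>insert j V. v < w} = {v\<in>V. v < w}" by auto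
    then show ?thesis using False by (simp add: Nc_def)
  qed
qed

lemma Nc_remove: "finite V \<Longrightarrow> w \<in> V \<Longrightarrow> Nc j V = Nc j (V - {w}) + (if w < j then 1 else 0)"
  using Nc_insert[of "V - {w}" w j] by (simp add: insert_absorb)

lemma Nc_ins_self: "Nc j (insert j V) = Nc j V"
  unfolding Nc_def by (rule arg_cong[where f=card]) auto

lemma Nc_rem_self: "Nc j (V - {j}) = Nc j V"
  unfolding Nc_def by (rule arg_cong[where f=card]) auto

lemma neg1_sq: "(-1::'a::comm_ring_1) ^ k * (-1) ^ k = 1"
  by (simp add: power_add[symmetric] mult_2[symmetric] power_mult)

lemma sign_swap:
  assumes "finite V" "j \<notin> V" "w \<in> V"
  shows "(-1::'a::comm_ring_1) ^ Nc j V * (-1) ^ Nc w (insert j V) = - ((-1) ^ Nc w V * (-1) ^ Nc j (V - {w}))"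
proof -
  have wj: "w \<noteq> j" using assms by auto
  have e1: "Nc w (insert j V) = Nc w V + (if j < w then 1 else 0)" using Nc_insert assms by blast
  have e2: "Nc j V = Nc j (V - {w}) + (if w < j then 1 else 0)" using Nc_remove assms by blast
  show ?thesis
  proof (cases "w < j")
    case True
    then show ?thesis unfolding e1 e2 by (simp add: power_add mult_ac)
  next
    case False
    with wj have "j < w" by simp
    then show ?thesis unfolding e1 e2 using False by (simp add: power_add mult_ac)
  qed
qed

lemma iota_Lw:
  assumes j: "j < m" and supp: "\<And>W. Q W \<noteq> 0 \<Longrightarrow> W \<subseteq> {..<m}"
  shows "iota j (Lw m a Q) V = a j * Q V - Lw m a (iota j Q) V"
proof (cases "V \<subseteq> {..<m}")
  case False
  then have "Q V = 0" using supp by blast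
  moreover have "\<not> insert j V \<subseteq> {..<m}" using False by auto
  ultimately show ?thesis using False by (simp add: iota_def Lw_def)
next
  case Vm: True
  then have fin: "finite V" using finite_subset by blast
  show ?thesis
  proof (cases "j \<in> V")
    case False
    have ijm: "insert j V \<subseteq> {..<m}" using Vm j by auto
    have "iota j (Lw m a Q) V = (-1) ^ Nc j V * (\<Sum>w\<in>insert j V. (-1) ^ Nc w (insert j V) * a w * Q (insert j V - {w}))"
      using False ijm by (simp add: iota_def Lw_def)
    also have "\<dots> = (-1) ^ Nc j V * ((-1) ^ Nc j (insert j V) * a j * Q V) +
        (\<Sum>w\<in>V. (-1) ^ Nc j V * (-1) ^ Nc w (insert j V) * a w * Q (insert j V - {w}))"
      using False fin by (simp add: distrib_left sum_distrib_left mult_ac)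
    also have "(-1) ^ Nc j V * ((-1) ^ Nc j (insert j V) * a j * Q V) = a j * Q V"
      using neg1_sq[of "Nc j V"] by (simp add: Nc_ins_self mult_ac)
    also have "(\<Sum>w\<in>V. (-1) ^ Nc j V * (-1) ^ Nc w (insert j V) * a w * Q (insert j V - {w}))
        = (\<Sum>w\<in>V. - ((-1) ^ Nc w V * a w * ((-1) ^ Nc j (V - {w}) * Q (insert j (V - {w})))))"
    proof (rule sum.cong)
      fix w assume w: "w \<in> V"
      then have "insert j V - {w} = insert j (V - {w})" using False by auto
      then show "(-1) ^ Nc j V * (-1) ^ Nc w (insert j V) * a w * Q (insert j V - {w}) =
          - ((-1) ^ Nc w V * a w * ((-1) ^ Nc j (V - {w}) * Q (insert j (V - {w}))))"
        using sign_swap[OF fin False w, where 'a='a] by (simp add: mult_ac)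
    qed simp
    also have "\<dots> = - Lw m a (iota j Q) V"
      using Vm False by (simp add: Lw_def iota_def sum_negf)
    finally show ?thesis by simp
  next
    case True
    have "Lw m a (iota j Q) V = (\<Sum>w\<in>V. (-1) ^ Nc w V * a w * iota j Q (V - {w}))"
      using Vm by (simp add: Lw_def)
    also have "\<dots> = (-1) ^ Nc j V * a j * iota j Q (V - {j}) + (\<Sum>w\<in>V - {j}. (-1) ^ Nc w V * a w * iota j Q (V - {w}))"
      using True fin by (simp add: sum.remove)
    also have "(\<Sum>w\<in>V - {j}. (-1) ^ Nc w V * a w * iota j Q (V - {w})) = 0"
      using True by (intro sum.neutral) (auto simp: iota_def)
    also have "(-1) ^ Nc j V * a j * iota j Q (V - {j}) = a j * Q V"
      using True neg1_sq[of "Nc j V"] by (simp add: iota_def Nc_rem_self insert_absorb mult_ac)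
    finally have "Lw m a (iota j Q) V = a j * Q V" by simp
    moreover have "iota j (Lw m a Q) V = 0" using True by (simp add: iota_def)
    ultimately show ?thesis by simp
  qed
qed

lemma Lw_lin:
  "Lw m a (\<lambda>W. \<Sum>u\<in>S. k u * P u W) V = (\<Sum>u\<in>S. k u * Lw m a (P u) V)"
  by (simp add: Lw_def sum_distrib_left sum_distrib_right mult_ac sum.swap[where A=S])

lemma PW_supp': "finite U \<Longrightarrow> PW m c U W \<noteq> 0 \<Longrightarrow> W \<subseteq> {..<m}"
  using PW_supp by blast

lemma iota_PW:
  assumes "finite U" "j < m"
  shows "iota j (PW m c U) V = (\<Sum>u\<in>U. (-1) ^ Nc u U * c u j * PW m c (U - {u}) V)"
  using assms(1)
proof (induction U arbitrary: V rule: finite_linorder_min_induct)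
  case empty
  then show ?case by (simp add: PW_empty iota_def ext_one_def)
next
  case (insert b U)
  have bU: "b \<notin> U" using insert.hyps by auto
  have "iota j (PW m c (insert b U)) V = c b j * PW m c U V - Lw m (c b) (iota j (PW m c U)) V"
    unfolding PW_insert[OF insert.hyps]
    by (rule iota_Lw[OF assms(2)]) (use PW_supp' insert.hyps in blast)
  also have "iota j (PW m c U) = (\<lambda>V. \<Sum>u\<in>U. ((-1) ^ Nc u U * c u j) * PW m c (U - {u}) V)"
    using insert.IH by (simp add: fun_eq_iff mult_ac)
  also have "Lw m (c b) \<dots> V = (\<Sum>u\<in>U. ((-1) ^ Nc u U * c u j) * PW m c (insert b U - {u}) V)"
  proof -
    have "\<And>u. u \<in> U \<Longrightarrow> Lw m (c b) (PW m c (U - {u})) = PW m c (insert b U - {u})"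
    proof -
      fix u assume u: "u \<in> U"
      then have "insert b U - {u} = insert b (U - {u})" using bU by auto
      then show "Lw m (c b) (PW m c (U - {u})) = PW m c (insert b U - {u})"
        using PW_insert[of "U - {u}" b m c] insert.hyps by auto
    qed
    then show ?thesis by (simp add: Lw_lin)
  qed
  finally have L: "iota j (PW m c (insert b U)) V = c b j * PW m c U V - (\<Sum>u\<in>U. ((-1) ^ Nc u U * c u j) * PW m c (insert b U - {u}) V)" .
  have "(\<Sum>u\<in>insert b U. (-1) ^ Nc u (insert b U) * c u j * PW m c (insert b U - {u}) V)
      = (-1) ^ Nc b (insert b U) * c b j * PW m c (insert b U - {b}) V +
        (\<Sum>u\<in>U. (-1) ^ Nc u (insert b U) * c u j * PW m c (insert b U - {u}) V)"
    using insert.hyps bU by simp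
  moreover have "Nc b (insert b U) = 0"
    using insert.hyps unfolding Nc_def by (auto intro!: Finite_Set.card_eq_0_iff[THEN iffD2])
  moreover have "insert b U - {b} = U" using bU by auto
  moreover have "\<And>u. u \<in> U \<Longrightarrow> Nc u (insert b U) = Nc u U + 1"
    using Nc_insert[of U b] insert.hyps bU by auto
  ultimately have "(\<Sum>u\<in>insert b U. (-1) ^ Nc u (insert b U) * c u j * PW m c (insert b U - {u}) V)
      = c b j * PW m c U V - (\<Sum>u\<in>U. ((-1) ^ Nc u U * c u j) * PW m c (insert b U - {u}) V)"
    by (simp add: sum_negf[symmetric])
  with L show ?case by simp
qed



lemma mdeg_super: "finite S \<Longrightarrow> Poly_Mapping.keys \<alpha> \<subseteq> S \<Longrightarrow> mdeg \<alpha> = (\<Sum>i\<in>S. Poly_Mapping.lookup \<alpha> i)"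
  unfolding mdeg_def by (intro sum.mono_neutral_left) (auto simp: in_keys_iff)

lemma mdeg_add: "mdeg (\<alpha> + \<beta>) = mdeg \<alpha> + mdeg \<beta>"
proof -
  let ?S = "Poly_Mapping.keys \<alpha> \<union> Poly_Mapping.keys \<beta>"
  have "mdeg (\<alpha> + \<beta>) = (\<Sum>i\<in>?S. Poly_Mapping.lookup (\<alpha>+\<beta>) i)"
    by (rule mdeg_super) (auto simp: keys_add_nat)
  also have "\<dots> = (\<Sum>i\<in>?S. Poly_Mapping.lookup \<alpha> i) + (\<Sum>i\<in>?S. Poly_Mapping.lookup \<beta> i)"
    by (simp add: lookup_add sum.distrib)
  also have "\<dots> = mdeg \<alpha> + mdeg \<beta>"
    using mdeg_super[of ?S \<alpha>] mdeg_super[of ?S \<beta>] by simp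
  finally show ?thesis .
qed

lemma mdeg_zero[simp]: "mdeg 0 = 0" by (simp add: mdeg_def)

lemma mdeg_eq_0: "mdeg \<gamma> = 0 \<Longrightarrow> \<gamma> = 0"
proof -
  assume "mdeg \<gamma> = 0"
  then have "\<forall>i\<in>Poly_Mapping.keys \<gamma>. Poly_Mapping.lookup \<gamma> i = 0"
    unfolding mdeg_def by simp
  then show ?thesis by (intro poly_mapping_eqI) (metis in_keys_iff lookup_zero)
qed

lemma mdeg_single1: "mdeg (Poly_Mapping.single k (1::nat)) = 1"
  by (simp add: mdeg_def)

definition homog :: "nat \<Rightarrow> ('a::zero) mpoly \<Rightarrow> bool" where
  "homog d p \<longleftrightarrow> (\<forall>\<beta>\<in>Poly_Mapping.keys p. mdeg \<beta> = d)"

lemma homog_add: "homog d p \<Longrightarrow> homog d q \<Longrightarrow> homog d (p + q)"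
  unfolding homog_def using keys_add[of p q] by (meson UnE subsetD)

lemma homog_zero[simp]: "homog d 0" by (simp add: homog_def)

lemma homog_sum: "(\<And>x. x \<in> S \<Longrightarrow> homog d (g x)) \<Longrightarrow> homog d (sum g S)"
  by (induct S rule: infinite_finite_induct) (auto intro: homog_add)

lemma homog_mult: "homog a p \<Longrightarrow> homog b q \<Longrightarrow> homog (a + b) ((p::'a::comm_ring_1 mpoly) * q)"
  unfolding homog_def
proof (intro ballI)
  fix \<gamma> assume h: "\<forall>\<beta>\<in>Poly_Mapping.keys p. mdeg \<beta> = a" "\<forall>\<beta>\<in>Poly_Mapping.keys q. mdeg \<beta> = b"
    and "\<gamma> \<in> Poly_Mapping.keys (p * q)"
  then obtain x y where "\<gamma> = x + y" "x \<in> Poly_Mapping.keys p" "y \<in> Poly_Mapping.keys q"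
    using keys_mult[of p q] by blast
  then show "mdeg \<gamma> = a + b" using h by (simp add: mdeg_add)
qed

lemma homog_one: "homog 0 (1::'a::comm_ring_1 mpoly)" by (simp add: homog_def)

lemma homog_power: "homog a p \<Longrightarrow> homog (k * a) ((p::'a::comm_ring_1 mpoly) ^ k)"
  by (induct k) (auto simp: homog_one dest: homog_mult)

lemma homog_prod: "(\<And>x. x \<in> S \<Longrightarrow> homog (d x) (g x)) \<Longrightarrow> homog (\<Sum>x\<in>S. d x) (\<Prod>x\<in>S. (g x :: 'a::comm_ring_1 mpoly))"
  by (induct S rule: infinite_finite_induct) (auto simp: homog_one intro: homog_mult)

lemma homog_lin_form: "homog 1 (lin_form n A j)"
  unfolding lin_form_def
proof (rule homog_sum)
  fix k
  have "const (A k j) * var k = Poly_Mapping.single (Poly_Mapping.single k 1) (A k j)"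
    by (simp add: const_def var_def monom_def mult_single)
  then show "homog 1 (const (A k j) * var k)"
    by (simp add: homog_def mdeg_def)
qed

lemma homog_M: "homog (mdeg \<alpha>) (M n A \<alpha>)"
proof -
  have "homog (\<Sum>j\<in>Poly_Mapping.keys \<alpha>. Poly_Mapping.lookup \<alpha> j * 1) (M n A \<alpha>)"
    unfolding M_def by (intro homog_prod homog_power homog_lin_form)
  then show ?thesis by (simp add: mdeg_def)
qed

lemma const_monom: "const (c::'a::comm_ring_1) * monom \<alpha> = Poly_Mapping.single \<alpha> c"
  by (simp add: const_def monom_def mult_single)

lemma lookup_mult_monom:
  assumes "mdeg \<beta> = mdeg \<alpha>"
  shows "Poly_Mapping.lookup (q * monom \<alpha>) \<beta> = (if \<alpha> = \<beta> then Poly_Mapping.lookup q 0 else (0::'a::comm_ring_1))"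
proof -
  let ?S = "insert 0 (Poly_Mapping.keys q)"
  have qe: "q = (\<Sum>\<gamma>\<in>?S. Poly_Mapping.single \<gamma> (Poly_Mapping.lookup q \<gamma>))"
    by (rule pm_repr_super) auto
  have "q * monom \<alpha> = (\<Sum>\<gamma>\<in>?S. Poly_Mapping.single \<gamma> (Poly_Mapping.lookup q \<gamma>)) * Poly_Mapping.single \<alpha> 1"
    unfolding monom_def by (rule arg_cong[where f="\<lambda>x. x * Poly_Mapping.single \<alpha> 1"], rule qe)
  also have "\<dots> = (\<Sum>\<gamma>\<in>?S. Poly_Mapping.single (\<gamma> + \<alpha>) (Poly_Mapping.lookup q \<gamma>))"
    by (simp add: sum_distrib_right mult_single)
  finally have "Poly_Mapping.lookup (q * monom \<alpha>) \<beta> = (\<Sum>\<gamma>\<in>?S. if \<gamma> + \<alpha> = \<beta> then Poly_Mapping.lookup q \<gamma> else 0)"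
    by (simp add: lookup_sum lookup_single when_def)
  also have "\<dots> = (\<Sum>\<gamma>\<in>?S. if \<gamma> = 0 then (if \<alpha> = \<beta> then Poly_Mapping.lookup q 0 else 0) else 0)"
  proof (rule sum.cong)
    fix \<gamma>
    have "\<gamma> + \<alpha> = \<beta> \<Longrightarrow> \<gamma> = 0" using assms by (metis add_cancel_right_left mdeg_add mdeg_eq_0)
    then show "(if \<gamma> + \<alpha> = \<beta> then Poly_Mapping.lookup q \<gamma> else 0) = (if \<gamma> = 0 then (if \<alpha> = \<beta> then Poly_Mapping.lookup q 0 else 0) else 0)"
      by auto
  qed simp
  also have "\<dots> = (if \<alpha> = \<beta> then Poly_Mapping.lookup q 0 else 0)"
    by (simp add: sum.delta)
  finally show ?thesis .
qed

lemma lookup_comb: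
  "Poly_Mapping.lookup (\<Sum>j<m. const (c j) * monom (al j)) \<beta> = (\<Sum>j<m. if al j = \<beta> then c j else (0::'a::comm_ring_1))"
  by (simp add: const_monom lookup_sum lookup_single when_def)

lemma decomp:
  fixes m :: nat
  assumes p: "p \<in> ideal_gen n (f ` {..<m})" and hp: "homog d p"
    and al: "\<And>j. j < m \<Longrightarrow> f j = monom (al j) \<and> mdeg (al j) = d"
    and inj: "inj_on f {..<m}"
  shows "\<exists>c. (\<forall>j\<ge>m. c j = 0) \<and> p = (\<Sum>j<m. const (c j) * f j)"
proof -
  from p obtain F h where F: "p = (\<Sum>g\<in>F. h g * g)" "finite F" "F \<subseteq> f ` {..<m}"
    unfolding ideal_gen_def by blast
  define G where "G = {j. j < m \<and> f j \<in> F}"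
  have FG: "F = f ` G" using F(3) unfolding G_def by auto
  have injG: "inj_on f G" using inj unfolding G_def by (rule inj_on_subset) auto
  define c where "c j = (if j \<in> G then Poly_Mapping.lookup (h (f j)) 0 else 0)" for j
  have c0: "\<forall>j\<ge>m. c j = 0" using leD by (auto simp: c_def G_def)
  have sumf: "(\<Sum>j<m. const (c j) * f j) = (\<Sum>j<m. const (c j) * monom (al j))"
    using al by simp
  have pG: "p = (\<Sum>j\<in>G. h (f j) * monom (al j))"
    unfolding F(1) FG sum.reindex[OF injG] by (rule sum.cong) (auto simp: G_def al)
  have "p = (\<Sum>j<m. const (c j) * f j)"
  proof (rule poly_mapping_eqI)
    fix \<beta>
    show "Poly_Mapping.lookup p \<beta> = Poly_Mapping.lookup (\<Sum>j<m. const (c j) * f j) \<beta>"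
    proof (cases "mdeg \<beta> = d")
      case False
      then have "\<beta> \<notin> Poly_Mapping.keys p" using hp by (auto simp: homog_def)
      then have "Poly_Mapping.lookup p \<beta> = 0" by (simp add: in_keys_iff)
      moreover have "(\<Sum>j<m. if al j = \<beta> then c j else 0) = 0"
        using al False by (intro sum.neutral) auto
      ultimately show ?thesis by (simp add: sumf lookup_comb)
    next
      case True
      have "Poly_Mapping.lookup p \<beta> = (\<Sum>j\<in>G. if al j = \<beta> then Poly_Mapping.lookup (h (f j)) 0 else 0)"
        unfolding pG lookup_sum
        by (rule sum.cong) (auto simp: G_def True al lookup_mult_monom)
      also have "\<dots> = (\<Sum>j<m. if al j = \<beta> then c j else 0)"
        unfolding c_def
        by (rule sum.mono_neutral_cong_left) (auto simp: G_def)
      finally show ?thesis by (simp add: sumf lookup_comb)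
    qed
  qed
  with c0 show ?thesis by blast
qed

lemma uniq:
  fixes m :: nat
  assumes al: "\<And>j. j < m \<Longrightarrow> f j = monom (al j)"
    and inj: "inj_on f {..<m}"
    and c: "\<forall>j\<ge>m. c j = 0" and c': "\<forall>j\<ge>m. c' j = 0"
    and eq: "(\<Sum>j<m. const (c j) * f j) = (\<Sum>j<m. const (c' j) * f j)"
  shows "c = (c' :: nat \<Rightarrow> 'a::comm_ring_1)"
proof
  fix k
  show "c k = c' k"
  proof (cases "k < m")
    case True
    have ia: "j < m \<Longrightarrow> al j = al k \<longleftrightarrow> j = k" for j
      using inj al True unfolding inj_on_def by (metis lessThan_iff)
    have "\<And>c. Poly_Mapping.lookup (\<Sum>j<m. const (c j) * f j) (al k) = (c k :: 'a)"
    proof -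
      fix c :: "nat \<Rightarrow> 'a"
      have "Poly_Mapping.lookup (\<Sum>j<m. const (c j) * f j) (al k) = (\<Sum>j<m. if al j = al k then c j else 0)"
        using al by (simp add: lookup_comb[symmetric])
      also have "\<dots> = (\<Sum>j<m. if j = k then c j else 0)"
        by (rule sum.cong) (auto simp: ia)
      also have "\<dots> = c k" using True by simp
      finally show "Poly_Mapping.lookup (\<Sum>j<m. const (c j) * f j) (al k) = c k" .
    qed
    then show ?thesis using eq by metis
  next
    case False
    then show ?thesis using c c' by simp
  qed
qed

lemma act_coeff_prop:
  assumes bI: "borel_fixed n I" and gens: "min_mon_gens_same_deg n I m f"
    and inv: "invertible_mat n A" and ut: "upper_triangular n A" and u: "u < m"
  shows "act n A (f u) = (\<Sum>j<m. const (act_coeff n A m f u j) * f j)"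
proof -
  from gens obtain d where d: "\<forall>i<m. \<exists>\<alpha>. f i = monom \<alpha> \<and> Poly_Mapping.keys \<alpha> \<subseteq> {..<n} \<and> mdeg \<alpha> = d"
    and I: "I = ideal_gen n (f ` {..<m})" and inj: "inj_on f {..<m}"
    unfolding min_mon_gens_same_deg_def by blast
  obtain al where al: "\<And>j. j < m \<Longrightarrow> f j = monom (al j) \<and> mdeg (al j) = d"
    using d by metis
  have "f u \<in> I"
  proof -
    have "f u = (\<Sum>g\<in>{f u}. (\<lambda>_. 1::'a mpoly) g * g)" by simp
    moreover have "{f u} \<subseteq> f ` {..<m}" using u by auto
    ultimately show ?thesis unfolding I ideal_gen_def
      apply (intro CollectI exI[where x="{f u}"] exI[where x="\<lambda>_. 1::'a mpoly"])
      using u by simp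
  qed
  then have "act n A (f u) \<in> act n A ` I" by blast
  also have "act n A ` I = I" using bI inv ut unfolding borel_fixed_def by blast
  finally have pI: "act n A (f u) \<in> ideal_gen n (f ` {..<m})" using I by simp
  have hp: "homog d (act n A (f u))"
    using al[OF u] homog_M[of "al u" n A] by (simp add: act_monom)
  obtain c where c: "(\<forall>j\<ge>m. c j = 0) \<and> act n A (f u) = (\<Sum>j<m. const (c j) * f j)"
    using decomp[OF pI hp al inj] by blast
  have ex1: "\<exists>!c. (\<forall>j\<ge>m. c j = 0) \<and> act n A (f u) = (\<Sum>j<m. const (c j) * f j)"
  proof (rule ex1I[of _ c])
    show "(\<forall>j\<ge>m. c j = 0) \<and> act n A (f u) = (\<Sum>j<m. const (c j) * f j)" using c .
    fix c' assume c': "(\<forall>j\<ge>m. c' j = 0) \<and> act n A (f u) = (\<Sum>j<m. const (c' j) * f j)"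
    show "c' = c"
      using uniq[of m f al c' c, OF _ inj] al c c' by auto
  qed
  show ?thesis
    using theI'[OF ex1] unfolding act_coeff_def by blast
qed



lemma act_e_eq: "act_e n A m f = (\<lambda>i. vec m (act_coeff n A m f i))"
  by (simp add: fun_eq_iff act_e_def vec_def)

lemma act_wedge_eq: "act_wedge n A m f = PW m (act_coeff n A m f)"
  by (simp add: fun_eq_iff act_wedge_def PW_def act_e_eq)

lemma reidx:
  assumes "finite S"
  shows "(\<Sum>U'\<in>Pow S. \<Sum>u\<in>S - U'. g U' u) = (\<Sum>U\<in>Pow S. \<Sum>u\<in>U. g (U - {u}) u)"
proof -
  have fin: "finite (Pow S)" using assms by simp
  have "(\<Sum>U'\<in>Pow S. \<Sum>u\<in>S - U'. g U' u) = (\<Sum>(U', u)\<in>Sigma (Pow S) (\<lambda>U'. S - U'). g U' u)"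
    using fin assms by (intro sum.Sigma) auto
  also have "\<dots> = (\<Sum>(U, u)\<in>Sigma (Pow S) (\<lambda>U. U). g (U - {u}) u)"
  proof (rule sum.reindex_bij_witness[where i="\<lambda>(U, u). (U - {u}, u)" and j="\<lambda>(U', u). (insert u U', u)"])
  qed (auto simp: insert_absorb)
  also have "\<dots> = (\<Sum>U\<in>Pow S. \<Sum>u\<in>U. g (U - {u}) u)"
    using fin assms by (intro sum.Sigma[symmetric]) (auto intro: finite_subset)
  finally show ?thesis .
qed

lemma ideal_sum: "is_ideal n J \<Longrightarrow> (\<And>x. x \<in> S \<Longrightarrow> g x \<in> J) \<Longrightarrow> sum g S \<in> J"
  by (induct S rule: infinite_finite_induct) (auto simp: is_ideal_def)

lemma key_identity:
  assumes coef: "\<And>u. u < m \<Longrightarrow> act n A (f u) = (\<Sum>j<m. const (act_coeff n A m f u j) * f j)"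
  shows "koszul_d m f (koszul_act n A m f z) V = koszul_act n A m f (koszul_d m f z) V"
proof -
  let ?c = "act_coeff n A m f"
  let ?P = "Pow {..<m}"
  let ?W = "PW m ?c"
  let ?Z = "\<lambda>U. act n A (z U)"
  let ?T = "\<lambda>U j. const (iota j (?W U) V) * f j * ?Z U"
  have "koszul_d m f (koszul_act n A m f z) V =
      (\<Sum>u\<in>{..<m} - V. (-1) ^ Nc u V * f u * (\<Sum>U\<in>?P. const (?W U (insert u V)) * ?Z U))"
    by (simp add: koszul_d_def koszul_act_def act_wedge_eq Nc_def)
  also have "\<dots> = (\<Sum>u<m. \<Sum>U\<in>?P. ?T U u)"
  proof (rule sum.mono_neutral_cong_left)
    show "\<forall>i\<in>{..<m} - ({..<m} - V). (\<Sum>U\<in>?P. ?T U i) = 0"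
      by (auto simp: iota_def)
    show "\<And>u. u \<in> {..<m} - V \<Longrightarrow> (-1) ^ Nc u V * f u * (\<Sum>U\<in>?P. const (?W U (insert u V)) * ?Z U) = (\<Sum>U\<in>?P. ?T U u)"
      by (simp add: iota_def const_mult const_neg1_pow sum_distrib_left mult_ac)
  qed auto
  also have "\<dots> = (\<Sum>U\<in>?P. \<Sum>j<m. ?T U j)"
    by (rule sum.swap)
  finally have L: "koszul_d m f (koszul_act n A m f z) V = (\<Sum>U\<in>?P. \<Sum>j<m. ?T U j)" .
  have "koszul_act n A m f (koszul_d m f z) V =
      (\<Sum>U'\<in>?P. const (?W U' V) * act n A (\<Sum>u\<in>{..<m} - U'. (-1) ^ Nc u U' * f u * z (insert u U')))"
    by (simp add: koszul_d_def koszul_act_def act_wedge_eq Nc_def)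
  also have "\<dots> = (\<Sum>U'\<in>?P. \<Sum>u\<in>{..<m} - U'. const (?W U' V) * ((-1) ^ Nc u U' * act n A (f u) * ?Z (insert u U')))"
    by (simp add: act_sum act_mult act_neg1_pow sum_distrib_left)
  also have "\<dots> = (\<Sum>U\<in>?P. \<Sum>u\<in>U. const (?W (U - {u}) V) * ((-1) ^ Nc u (U - {u}) * act n A (f u) * ?Z (insert u (U - {u}))))"
    by (rule reidx) simp
  also have "\<dots> = (\<Sum>U\<in>?P. \<Sum>u\<in>U. \<Sum>j<m. const ((-1) ^ Nc u U * ?c u j * ?W (U - {u}) V) * f j * ?Z U)"
  proof (rule sum.cong[OF refl], rule sum.cong[OF refl])
    fix U u assume U: "U \<in> ?P" and u: "u \<in> U"
    then have um: "u < m" by auto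
    have iu: "insert u (U - {u}) = U" using u by auto
    show "const (?W (U - {u}) V) * ((-1) ^ Nc u (U - {u}) * act n A (f u) * ?Z (insert u (U - {u}))) =
        (\<Sum>j<m. const ((-1) ^ Nc u U * ?c u j * ?W (U - {u}) V) * f j * ?Z U)"
      unfolding iu Nc_rem_self coef[OF um]
      by (simp add: sum_distrib_left sum_distrib_right const_mult const_neg1_pow mult_ac)
  qed
  also have "\<dots> = (\<Sum>U\<in>?P. \<Sum>j<m. ?T U j)"
  proof (rule sum.cong[OF refl])
    fix U assume U: "U \<in> ?P"
    then have fU: "finite U" by (auto intro: finite_subset)
    have "(\<Sum>u\<in>U. \<Sum>j<m. const ((-1) ^ Nc u U * ?c u j * ?W (U - {u}) V) * f j * ?Z U)
        = (\<Sum>j<m. \<Sum>u\<in>U. const ((-1) ^ Nc u U * ?c u j * ?W (U - {u}) V) * f j * ?Z U)"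
      by (rule sum.swap)
    also have "\<dots> = (\<Sum>j<m. ?T U j)"
    proof (rule sum.cong[OF refl])
      fix j assume "j \<in> {..<m}"
      then have jm: "j < m" by simp
      show "(\<Sum>u\<in>U. const ((-1) ^ Nc u U * ?c u j * ?W (U - {u}) V) * f j * ?Z U) = ?T U j"
        unfolding iota_PW[OF fU jm] const_sum by (simp add: sum_distrib_right)
    qed
    finally show "(\<Sum>u\<in>U. \<Sum>j<m. const ((-1) ^ Nc u U * ?c u j * ?W (U - {u}) V) * f j * ?Z U) = (\<Sum>j<m. ?T U j)" .
  qed
  finally show ?thesis using L by simp
qed



theorem lemma4p1:
  fixes n m :: nat
    and I J :: "'a::field_char_0 mpoly set"
    and f :: "nat \<Rightarrow> 'a mpoly"
    and A :: "nat \<Rightarrow> nat \<Rightarrow> 'a"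
  assumes "borel_fixed n I" and "borel_fixed n J"
    and "min_mon_gens_same_deg n I m f"
    and "invertible_mat n A" and "upper_triangular n A"
  shows "\<forall>t z. koszul_cycle n m f J t z \<longrightarrow> koszul_cycle n m f J t (koszul_act n A m f z)"
proof (intro allI impI)
  fix t z assume cyc: "koszul_cycle n m f J t z"
  then have el: "koszul_elem n m t z" and dz: "\<And>V. koszul_d m f z V \<in> J"
    by (auto simp: koszul_cycle_def)
  have coef: "\<And>u. u < m \<Longrightarrow> act n A (f u) = (\<Sum>j<m. const (act_coeff n A m f u j) * f j)"
    using act_coeff_prop[OF assms(1) assms(3) assms(4) assms(5)] by blast
  have Jid: "is_ideal n J" using assms(2) by (simp add: borel_fixed_def monomial_ideal_def)
  have actJ: "act n A ` J = J" using assms(2) assms(4) assms(5) by (simp add: borel_fixed_def)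
  let ?c = "act_coeff n A m f"
  have el': "koszul_elem n m t (koszul_act n A m f z)"
    unfolding koszul_elem_def
  proof (intro conjI allI impI)
    fix U
    show "in_S n (koszul_act n A m f z U)"
      unfolding koszul_act_def by (intro in_S_sum in_S_mult in_S_const in_S_act)
  next
    fix U assume nU: "\<not> (U \<subseteq> {..<m} \<and> card U = t)"
    show "koszul_act n A m f z U = 0"
      unfolding koszul_act_def act_wedge_eq
    proof (rule sum.neutral, intro ballI)
      fix U' assume U': "U' \<in> Pow {..<m}"
      then have fU': "finite U'" by (auto intro: finite_subset)
      show "const (PW m ?c U' U) * act n A (z U') = 0"
      proof (cases "card U' = t")
        case True
        then have "PW m ?c U' U = 0" using PW_supp[OF fU', of m ?c U] nU by auto
        then show ?thesis by simp
      next
        case False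
        then have "z U' = 0" using el unfolding koszul_elem_def by blast
        then show ?thesis by simp
      qed
    qed
  qed
  have "\<And>V. koszul_d m f (koszul_act n A m f z) V \<in> J"
  proof -
    fix V
    have "koszul_act n A m f (koszul_d m f z) V \<in> J"
      unfolding koszul_act_def
    proof (rule ideal_sum[OF Jid])
      fix U
      have "act n A (koszul_d m f z U) \<in> J" using dz[of U] actJ by blast
      then show "const (act_wedge n A m f U V) * act n A (koszul_d m f z U) \<in> J"
        using Jid by (simp add: is_ideal_def)
    qed
    then show "koszul_d m f (koszul_act n A m f z) V \<in> J"
      using key_identity[OF coef] by simp
  qed
  with el' show "koszul_cycle n m f J t (koszul_act n A m f z)"
    by (simp add: koszul_cycle_def)
qed

end
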